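(* Let $n,p\ge1$ be integers and let $\mathbf{A}^{p+1}_{n+1}=\langle A;\odot,\Rightarrow,\wedge,\vee,\bot,\top\rangle$ be as defined in the context. Then: (i) $\langle A;\odot,\top\rangle$ is a commutative monoid; (ii) $\le$ is a lattice order on $A$ and $\langle A;\wedge,\vee,\bot,\top\rangle$ is a bounded distributive lattice with least element $\bot=\langle(n,0),0\rangle$ and greatest element $\top=\langle(n,0),p\rangle$; (iii) for all $a,b,c\in A$, $a\odot b\le c$ iff $a\le b\Rightarrow c$; (iv) $\mathbf{A}^{p+1}_{n+1}$ is involutive: for every $a\in A$, $(a\Rightarrow\bot)\Rightarrow\bot=a$.
   Context: Order $\mathbb{Z}\times\mathbb{Z}$ lexicographically: $(m,r)\preccurlyeq(k,s)$ iff $m<k$, or $m=k$ and $r\le s$; addition/subtraction of pairs is componentwise, and $\min,\max$ of pairs refer to $\preccurlyeq$. For an integer $n\ge1$ let $L^\omega_{n+1}=\{(m,r)\in\mathbb{Z}^2:(0,0)\preccurlyeq(m,r)\preccurlyeq(n,0)\}$ with $x\ast y=\max\{(0,0),x+y-(n,0)\}$ and $x\to y=\min\{(n,0),(n,0)-x+y\}$. For an integer $p\ge1$ let $L_{p+1}=\{0,1,\dots,p\}$ with $\alpha\ast\beta=\max\{0,\alpha+\beta-p\}$. Define $$A=A^{p+1}_{n+1}=\{\langle(m,r),\alpha\rangle:(m,r)\in L^\omega_{n+1},\ \alpha\in\{0,p\}\}\cup\{\langle(m,r),\alpha\rangle:(0,0)\preccurlyeq(m,r)\preccurlyeq(n-1,0),\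 0<\alpha<p\}.$$ Order: $\langle(m,r),\alpha\rangle\le\langle(k,s),\beta\rangle$ iff one of: (o1) $\alpha\neq0$, $\alpha\le\beta$ and $(m,r)\preccurlyeq(k,s)$; (o2) $\alpha=\beta=0$ and $(k,s)\preccurlyeq(m,r)$; (o3) $\alpha=0$, $\beta\ne0$ and $(n-1,0)\preccurlyeq(m+k,r+s)$. $\wedge,\vee$ denote meet and join for $\le$. Put $\bot=\langle(n,0),0\rangle$, $\top=\langle(n,0),p\rangle$. For $a=\langle(m,r),\alpha\rangle$, $b=\langle(k,s),\beta\rangle\in A$ define $a\odot b$ by: (P1) if $\alpha,\beta\ge1$ and $\alpha+\beta>p$: $a\odot b=\langle(m,r)\ast(k,s),\alpha+\beta-p\rangle$; (P2) if $\alpha,\beta\ge1$ and $\alpha+\beta\le p$: $a\odot b=\langle\min\{(n,0),(2n-(m+k+1),-(r+s))\},0\rangle$; (P3) if $\alpha\ge1$, $\beta=0$: $a\odot b=\langle(m,r)\to(k,s),0\rangle$, and if $\alpha=0$, $\beta\ge1$: $a\odot b=\langle(k,s)\to(m,r),0\rangle$; (P4) if $\alpha=\beta=0$: $a\odot b=\langle\min\{(n,0),(m+k+1,r+s)\},0\rangle$. Define $\sim\langle(m,r),\alpha\rangle=\langle(m,r),p-\alpha\rangle$ if $\alpha\in\{0,p\}$, and $\sim\langle(m,r),\alpha\rangle=\langle(n-1-m,-r),p-\alpha\rangle$ if $0<\alpha<p$. Define $a\Rightarrow b=\sim(a\odot\sim b)$. The algebra $\mathbf{A}^{p+1}_{n+1}$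 is $\langle A;\odot,\Rightarrow,\wedge,\vee,\bot,\top\rangle$. *)

theory Defs
  imports Main
begin

type_synonym zpair = "int \<times> int"
type_synonym elem = "zpair \<times> int"

definition lex_le :: "zpair \<Rightarrow> zpair \<Rightarrow> bool" where
  "lex_le x y \<longleftrightarrow> fst x < fst y \<or> (fst x = fst y \<and> snd x \<le> snd y)"

definition padd :: "zpair \<Rightarrow> zpair \<Rightarrow> zpair" where
  "padd x y = (fst x + fst y, snd x + snd y)"

definition psub :: "zpair \<Rightarrow> zpair \<Rightarrow> zpair" where
  "psub x y = (fst x - fst y, snd x - snd y)"

definition lmin :: "zpair \<Rightarrow> zpair \<Rightarrow> zpair" where
  "lmin x y = (if lex_le x y then x else y)"

definition lmax :: "zpair \<Rightarrow> zpair \<Rightarrow> zpair" where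
  "lmax x y = (if lex_le x y then y else x)"

definition Lw :: "int \<Rightarrow> zpair set" where
  "Lw n = {x. lex_le (0,0) x \<and> lex_le x (n,0)}"

definition lstar :: "int \<Rightarrow> zpair \<Rightarrow> zpair \<Rightarrow> zpair" where
  "lstar n x y = lmax (0,0) (psub (padd x y) (n,0))"

definition limp :: "int \<Rightarrow> zpair \<Rightarrow> zpair \<Rightarrow> zpair" where
  "limp n x y = lmin (n,0) (padd (psub (n,0) x) y)"

definition Acar :: "int \<Rightarrow> int \<Rightarrow> elem set" where
  "Acar n p = {(x, \<alpha>). x \<in> Lw n \<and> (\<alpha> = 0 \<or> \<alpha> = p)}
            \<union> {(x, \<alpha>). lex_le (0,0) x \<and> lex_le x (n - 1, 0) \<and> 0 < \<alpha> \<and> \<alpha> < p}"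

definition Ale :: "int \<Rightarrow> elem \<Rightarrow> elem \<Rightarrow> bool" where
  "Ale n a b \<longleftrightarrow>
     (case a of (x, \<alpha>) \<Rightarrow> case b of (y, \<beta>) \<Rightarrow>
       (\<alpha> \<noteq> 0 \<and> \<alpha> \<le> \<beta> \<and> lex_le x y)
     \<or> (\<alpha> = 0 \<and> \<beta> = 0 \<and> lex_le y x)
     \<or> (\<alpha> = 0 \<and> \<beta> \<noteq> 0 \<and> lex_le (n - 1, 0) (padd x y)))"

definition is_glb :: "'a set \<Rightarrow> ('a \<Rightarrow> 'a \<Rightarrow> bool) \<Rightarrow> 'a \<Rightarrow> 'a \<Rightarrow> 'a \<Rightarrow> bool" where
  "is_glb S le a b z \<longleftrightarrow> z \<in> S \<and> le z a \<and> le z b \<and> (\<forall>w\<in>S. le w a \<and> le w b \<longrightarrow> le w z)"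

definition is_lub :: "'a set \<Rightarrow> ('a \<Rightarrow> 'a \<Rightarrow> bool) \<Rightarrow> 'a \<Rightarrow> 'a \<Rightarrow> 'a \<Rightarrow> bool" where
  "is_lub S le a b z \<longleftrightarrow> z \<in> S \<and> le a z \<and> le b z \<and> (\<forall>w\<in>S. le a w \<and> le b w \<longrightarrow> le z w)"

definition Ameet :: "int \<Rightarrow> int \<Rightarrow> elem \<Rightarrow> elem \<Rightarrow> elem" where
  "Ameet n p a b = (THE z. is_glb (Acar n p) (Ale n) a b z)"

definition Ajoin :: "int \<Rightarrow> int \<Rightarrow> elem \<Rightarrow> elem \<Rightarrow> elem" where
  "Ajoin n p a b = (THE z. is_lub (Acar n p) (Ale n) a b z)"

definition Abot :: "int \<Rightarrow> elem" where
  "Abot n = ((n, 0), 0)"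

definition Atop :: "int \<Rightarrow> int \<Rightarrow> elem" where
  "Atop n p = ((n, 0), p)"

definition Aprod :: "int \<Rightarrow> int \<Rightarrow> elem \<Rightarrow> elem \<Rightarrow> elem" where
  "Aprod n p a b =
     (case a of ((m, r), \<alpha>) \<Rightarrow> case b of ((k, s), \<beta>) \<Rightarrow>
       if 1 \<le> \<alpha> \<and> 1 \<le> \<beta> \<and> \<alpha> + \<beta> > p then (lstar n (m, r) (k, s), \<alpha> + \<beta> - p)
       else if 1 \<le> \<alpha> \<and> 1 \<le> \<beta> then (lmin (n, 0) (2 * n - (m + k + 1), - (r + s)), 0)
       else if 1 \<le> \<alpha> \<and> \<beta> = 0 then (limp n (m, r) (k, s), 0)
       else if \<alpha> = 0 \<and> 1 \<le> \<beta> then (limp n (k, s) (m, r), 0)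
       else (lmin (n, 0) (m + k + 1, r + s), 0))"

definition Aneg :: "int \<Rightarrow> int \<Rightarrow> elem \<Rightarrow> elem" where
  "Aneg n p a =
     (case a of ((m, r), \<alpha>) \<Rightarrow>
       if \<alpha> = 0 \<or> \<alpha> = p then ((m, r), p - \<alpha>) else ((n - 1 - m, - r), p - \<alpha>))"

definition Aimp :: "int \<Rightarrow> int \<Rightarrow> elem \<Rightarrow> elem \<Rightarrow> elem" where
  "Aimp n p a b = Aneg n p (Aprod n p a (Aneg n p b))"

end

theory Submission
  imports Defs
begin

declare [[smt_timeout=300, smt_reconstruction_step_timeout=300]]

definition lx :: "int\<Rightarrow>int\<Rightarrow>int\<Rightarrow>int\<Rightarrow>bool" where
 "lx m r k s \<longleftrightarrow> m<k \<or> (m=k \<and> r\<le>s)"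

definition car :: "int\<Rightarrow>int\<Rightarrow>int\<Rightarrow>int\<Rightarrow>int\<Rightarrow>bool" where
 "car n p m r a \<longleftrightarrow> lx 0 0 m r \<and> lx m r n 0 \<and> 0 \<le> a \<and> a \<le> p \<and> (0<a \<and> a<p \<longrightarrow> lx m r (n-1) 0)"

definition le3 :: "int\<Rightarrow>int\<Rightarrow>int\<Rightarrow>int\<Rightarrow>int\<Rightarrow>int\<Rightarrow>int\<Rightarrow>bool" where
 "le3 n m r a k s b \<longleftrightarrow> (a\<noteq>0 \<and> a\<le>b \<and> lx m r k s) \<or> (a=0 \<and> b=0 \<and> lx k s m r) \<or> (a=0 \<and> b\<noteq>0 \<and> lx (n-1) 0 (m+k) (r+s))"

definition ps :: "int\<Rightarrow>int\<Rightarrow>int\<Rightarrow>int\<Rightarrow>int\<Rightarrow>int\<Rightarrow>int\<Rightarrow>int\<Rightarrow>int\<Rightarrow>int\<Rightarrow>int\<Rightarrow>bool" where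
 "ps n p m r a k s b M R A \<longleftrightarrow>
   (1\<le>a \<and> 1\<le>b \<and> p<a+b \<longrightarrow> (lx 0 0 (m+k-n) (r+s) \<longrightarrow> M = m+k-n \<and> R = r+s) \<and> (\<not> lx 0 0 (m+k-n) (r+s) \<longrightarrow> M = 0 \<and> R = 0) \<and> A = a+b-p)
 \<and> (1\<le>a \<and> 1\<le>b \<and> \<not> p<a+b \<longrightarrow> (lx n 0 (2*n-(m+k+1)) (-(r+s)) \<longrightarrow> M = n \<and> R = 0) \<and> (\<not> lx n 0 (2*n-(m+k+1)) (-(r+s)) \<longrightarrow> M = 2*n-(m+k+1) \<and> R = -(r+s)) \<and> A = 0)
 \<and> (1\<le>a \<and> b=0 \<longrightarrow> (lx n 0 (n-m+k) (s-r) \<longrightarrow> M = n \<and> R = 0) \<and> (\<not> lx n 0 (n-m+k) (s-r) \<longrightarrow> M = n-m+k \<and> R = s-r) \<and> A = 0)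
 \<and> (a=0 \<and> 1\<le>b \<longrightarrow> (lx n 0 (n-k+m) (r-s) \<longrightarrow> M = n \<and> R = 0) \<and> (\<not> lx n 0 (n-k+m) (r-s) \<longrightarrow> M = n-k+m \<and> R = r-s) \<and> A = 0)
 \<and> (a=0 \<and> b=0 \<longrightarrow> (lx n 0 (m+k+1) (r+s) \<longrightarrow> M = n \<and> R = 0) \<and> (\<not> lx n 0 (m+k+1) (r+s) \<longrightarrow> M = m+k+1 \<and> R = r+s) \<and> A = 0)"

definition ng :: "int\<Rightarrow>int\<Rightarrow>int\<Rightarrow>int\<Rightarrow>int\<Rightarrow>int\<Rightarrow>int\<Rightarrow>int\<Rightarrow>bool" where
 "ng n p m r a M R A \<longleftrightarrow> ((a=0 \<or> a=p) \<longrightarrow> M=m \<and> R=r) \<and> (\<not>(a=0 \<or> a=p) \<longrightarrow> M=n-1-m \<and> R= -r) \<and> A=p-a"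

definition Mt :: "int \<Rightarrow> elem \<Rightarrow> elem \<Rightarrow> elem" where
 "Mt n x y = (case x of ((m,r),a) \<Rightarrow> case y of ((k,s),b) \<Rightarrow>
    if a\<noteq>0 \<and> b\<noteq>0 then (lmin (m,r) (k,s), min a b)
    else if a=0 \<and> b=0 then (lmax (m,r) (k,s), 0)
    else if a=0 then (lmax (m,r) (n-1-k, -s), 0)
    else (lmax (k,s) (n-1-m, -r), 0))"

definition Jn :: "int \<Rightarrow> elem \<Rightarrow> elem \<Rightarrow> elem" where
 "Jn n x y = (case x of ((m,r),a) \<Rightarrow> case y of ((k,s),b) \<Rightarrow>
    if a\<noteq>0 \<and> b\<noteq>0 then (lmax (m,r) (k,s), max a b)
    else if a=0 \<and> b=0 then (lmin (m,r) (k,s), 0)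
    else if a=0 then (lmax (k,s) (n-1-m, -r), b)
    else (lmax (m,r) (n-1-k, -s), a))"

definition mt :: "int\<Rightarrow>int\<Rightarrow>int\<Rightarrow>int\<Rightarrow>int\<Rightarrow>int\<Rightarrow>int\<Rightarrow>int\<Rightarrow>int\<Rightarrow>int\<Rightarrow>bool" where
 "mt n m r a k s b M R A \<longleftrightarrow>
   (a\<noteq>0 \<and> b\<noteq>0 \<longrightarrow> (lx m r k s \<longrightarrow> M=m \<and> R=r) \<and> (\<not> lx m r k s \<longrightarrow> M=k \<and> R=s) \<and> A = min a b)
 \<and> (a=0 \<and> b=0 \<longrightarrow> (lx m r k s \<longrightarrow> M=k \<and> R=s) \<and> (\<not> lx m r k s \<longrightarrow> M=m \<and> R=r) \<and> A = 0)
 \<and> (a=0 \<and> b\<noteq>0 \<longrightarrow> (lx m r (n-1-k) (-s) \<longrightarrow> M=n-1-k \<and> R= -s) \<and> (\<not> lx m r (n-1-k) (-s) \<longrightarrow> M=m \<and> R=r) \<and> A = 0)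
 \<and> (a\<noteq>0 \<and> b=0 \<longrightarrow> (lx k s (n-1-m) (-r) \<longrightarrow> M=n-1-m \<and> R= -r) \<and> (\<not> lx k s (n-1-m) (-r) \<longrightarrow> M=k \<and> R=s) \<and> A = 0)"

definition jn :: "int\<Rightarrow>int\<Rightarrow>int\<Rightarrow>int\<Rightarrow>int\<Rightarrow>int\<Rightarrow>int\<Rightarrow>int\<Rightarrow>int\<Rightarrow>int\<Rightarrow>bool" where
 "jn n m r a k s b M R A \<longleftrightarrow>
   (a\<noteq>0 \<and> b\<noteq>0 \<longrightarrow> (lx m r k s \<longrightarrow> M=k \<and> R=s) \<and> (\<not> lx m r k s \<longrightarrow> M=m \<and> R=r) \<and> A = max a b)
 \<and> (a=0 \<and> b=0 \<longrightarrow> (lx m r k s \<longrightarrow> M=m \<and> R=r) \<and> (\<not> lx m r k s \<longrightarrow> M=k \<and> R=s) \<and> A = 0)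
 \<and> (a=0 \<and> b\<noteq>0 \<longrightarrow> (lx k s (n-1-m) (-r) \<longrightarrow> M=n-1-m \<and> R= -r) \<and> (\<not> lx k s (n-1-m) (-r) \<longrightarrow> M=k \<and> R=s) \<and> A = b)
 \<and> (a\<noteq>0 \<and> b=0 \<longrightarrow> (lx m r (n-1-k) (-s) \<longrightarrow> M=n-1-k \<and> R= -s) \<and> (\<not> lx m r (n-1-k) (-s) \<longrightarrow> M=m \<and> R=r) \<and> A = a)"

lemma lex_lx: "lex_le (m,r) (k,s) = lx m r k s" by (simp add: lex_le_def lx_def)

lemma Acar_eq: "p \<ge> 1 \<Longrightarrow> ((m,r),a) \<in> Acar n p \<longleftrightarrow> car n p m r a"
  unfolding Acar_def car_def Lw_def lex_le_def lx_def by auto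

lemma Ale_eq: "Ale n ((m,r),a) ((k,s),b) \<longleftrightarrow> le3 n m r a k s b"
  unfolding Ale_def le3_def lex_le_def lx_def padd_def by auto

lemma Aprod_ps: "Aprod n p ((m,r),a) ((k,s),b) = ((M,R),A) \<Longrightarrow> ps n p m r a k s b M R A"
  unfolding Aprod_def ps_def lstar_def limp_def lmin_def lmax_def padd_def psub_def lex_lx
  by (auto simp: algebra_simps split: if_splits)

lemma Aneg_ng: "Aneg n p ((m,r),a) = ((M,R),A) \<Longrightarrow> ng n p m r a M R A"
  unfolding Aneg_def ng_def by (auto split: if_splits)

lemma Mt_mt: "Mt n ((m,r),a) ((k,s),b) = ((M,R),A) \<Longrightarrow> mt n m r a k s b M R A"
  unfolding Mt_def mt_def lmin_def lmax_def lex_lx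
  by (auto split: if_splits)

lemma Jn_jn: "Jn n ((m,r),a) ((k,s),b) = ((M,R),A) \<Longrightarrow> jn n m r a k s b M R A"
  unfolding Jn_def jn_def lmin_def lmax_def lex_lx
  by (auto split: if_splits)



lemma closure_c: "n\<ge>1 \<Longrightarrow> p\<ge>1 \<Longrightarrow> car n p m r a \<Longrightarrow> car n p k s b \<Longrightarrow> ps n p m r a k s b M R A \<Longrightarrow> car n p M R A"
  unfolding car_def ps_def lx_def by smt

lemma comm_c: "car n p m r a \<Longrightarrow> car n p k s b \<Longrightarrow> ps n p m r a k s b M R A \<Longrightarrow> ps n p k s b m r a M' R' A' \<Longrightarrow> M=M' \<and> R=R' \<and> A=A'"
  unfolding car_def ps_def lx_def by smt

lemma unit_c: "n\<ge>1 \<Longrightarrow> p\<ge>1 \<Longrightarrow> car n p m r a \<Longrightarrow> ps n p m r a n 0 p M R A \<Longrightarrow> M=m \<and> R=r \<and> A=a"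
  unfolding car_def ps_def lx_def by smt

lemma refl_c: "car n p m r a \<Longrightarrow> le3 n m r a m r a"
  unfolding car_def le3_def lx_def by smt

lemma antisym_c: "n\<ge>1 \<Longrightarrow> car n p m r a \<Longrightarrow> car n p k s b \<Longrightarrow> le3 n m r a k s b \<Longrightarrow> le3 n k s b m r a \<Longrightarrow> m=k \<and> r=s \<and> a=b"
  unfolding car_def le3_def lx_def by smt

lemma trans_c: "n\<ge>1 \<Longrightarrow> car n p m r a \<Longrightarrow> car n p k s b \<Longrightarrow> car n p u v c \<Longrightarrow> le3 n m r a k s b \<Longrightarrow> le3 n k s b u v c \<Longrightarrow> le3 n m r a u v c"
  unfolding car_def le3_def lx_def by smt

lemma bounds_c: "n\<ge>1 \<Longrightarrow> p\<ge>1 \<Longrightarrow> car n p m r a \<Longrightarrow> le3 n n 0 0 m r a \<and> le3 n m r a n 0 p"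
  unfolding car_def le3_def lx_def by smt

lemma mt_car: "n\<ge>1 \<Longrightarrow> p\<ge>1 \<Longrightarrow> car n p m r a \<Longrightarrow> car n p k s b \<Longrightarrow> mt n m r a k s b M R A \<Longrightarrow> car n p M R A \<and> le3 n M R A m r a \<and> le3 n M R A k s b"
  unfolding car_def le3_def mt_def lx_def by smt

lemma mt_glb: "n\<ge>1 \<Longrightarrow> p\<ge>1 \<Longrightarrow> car n p m r a \<Longrightarrow> car n p k s b \<Longrightarrow> mt n m r a k s b M R A \<Longrightarrow> car n p x y c \<Longrightarrow> le3 n x y c m r a \<Longrightarrow> le3 n x y c k s b \<Longrightarrow> le3 n x y c M R A"
  unfolding car_def le3_def mt_def lx_def by smt

lemma jn_car: "n\<ge>1 \<Longrightarrow> p\<ge>1 \<Longrightarrow> car n p m r a \<Longrightarrow> car n p k s b \<Longrightarrow> jn n m r a k s b M R A \<Longrightarrow> car n p M R A \<and> le3 n m r a M R A \<and> le3 n k s b M R A"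
  unfolding car_def le3_def jn_def lx_def by smt

lemma jn_lub: "n\<ge>1 \<Longrightarrow> p\<ge>1 \<Longrightarrow> car n p m r a \<Longrightarrow> car n p k s b \<Longrightarrow> jn n m r a k s b M R A \<Longrightarrow> car n p x y c \<Longrightarrow> le3 n m r a x y c \<Longrightarrow> le3 n k s b x y c \<Longrightarrow> le3 n M R A x y c"
  unfolding car_def le3_def jn_def lx_def by smt

lemma dist_c: "n\<ge>1 \<Longrightarrow> p\<ge>1 \<Longrightarrow> car n p m r a \<Longrightarrow> car n p k s b \<Longrightarrow> car n p u v c \<Longrightarrow>
  jn n k s b u v c J1 J2 J3 \<Longrightarrow> mt n m r a J1 J2 J3 L1 L2 L3 \<Longrightarrow>
  mt n m r a k s b P1 P2 P3 \<Longrightarrow> mt n m r a u v c Q1 Q2 Q3 \<Longrightarrow> jn n P1 P2 P3 Q1 Q2 Q3 R1 R2 R3 \<Longrightarrow>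
  L1=R1 \<and> L2=R2 \<and> L3=R3"
  unfolding car_def jn_def mt_def lx_def by smt

lemma resid_c: "n\<ge>1 \<Longrightarrow> p\<ge>1 \<Longrightarrow> car n p m r a \<Longrightarrow> car n p k s b \<Longrightarrow> car n p u v c \<Longrightarrow>
  ps n p m r a k s b P1 P2 P3 \<Longrightarrow> ng n p u v c C1 C2 C3 \<Longrightarrow> ps n p k s b C1 C2 C3 Q1 Q2 Q3 \<Longrightarrow> ng n p Q1 Q2 Q3 I1 I2 I3 \<Longrightarrow>
  le3 n P1 P2 P3 u v c \<longleftrightarrow> le3 n m r a I1 I2 I3"
  unfolding car_def le3_def ps_def ng_def lx_def by smt

lemma invol_c: "n\<ge>1 \<Longrightarrow> p\<ge>1 \<Longrightarrow> car n p m r a \<Longrightarrow>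
  ng n p n 0 0 T1 T2 T3 \<Longrightarrow> ps n p m r a T1 T2 T3 P1 P2 P3 \<Longrightarrow> ng n p P1 P2 P3 I1 I2 I3 \<Longrightarrow>
  ps n p I1 I2 I3 T1 T2 T3 Q1 Q2 Q3 \<Longrightarrow> ng n p Q1 Q2 Q3 F1 F2 F3 \<Longrightarrow> F1=m \<and> F2=r \<and> F3=a"
  unfolding car_def ps_def ng_def lx_def by smt



lemma assoc_c:
  assumes "n\<ge>1" "p\<ge>1" "car n p m r a" "car n p k s b" "car n p u v c"
   "ps n p m r a k s b Pm Pr q" "ps n p k s b u v c Qm Qr t"
   "ps n p Pm Pr q u v c Lm Lr l" "ps n p m r a Qm Qr t Rm Rr l'"
  shows "Lm=Rm \<and> Lr=Rr \<and> l=l'"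
  using assms unfolding ps_def car_def lx_def by smt

lemma dec: obtains m r a where "x = ((m,r),a)" by (metis surjective_pairing)

context fixes n p :: int assumes n1: "n\<ge>1" and p1: "p\<ge>1"
begin

lemma prodE: obtains M R A where "Aprod n p ((m,r),a) ((k,s),b) = ((M,R),A)" "ps n p m r a k s b M R A"
  by (metis Aprod_ps dec)

lemma negE: obtains M R A where "Aneg n p ((m,r),a) = ((M,R),A)" "ng n p m r a M R A"
  by (metis Aneg_ng dec)

lemma mtE: obtains M R A where "Mt n ((m,r),a) ((k,s),b) = ((M,R),A)" "mt n m r a k s b M R A"
  by (metis Mt_mt dec)

lemma jnE: obtains M R A where "Jn n ((m,r),a) ((k,s),b) = ((M,R),A)" "jn n m r a k s b M R A"
  by (metis Jn_jn dec)

lemma carE: assumes "x \<in> Acar n p" obtains m r a where "x = ((m,r),a)" "car n p m r a"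
  using assms Acar_eq[OF p1] by (metis dec)

lemma clo: assumes "x \<in> Acar n p" "y \<in> Acar n p" shows "Aprod n p x y \<in> Acar n p"
proof -
  obtain m r a where x: "x = ((m,r),a)" "car n p m r a" using assms carE by blast
  obtain k s b where y: "y = ((k,s),b)" "car n p k s b" using assms carE by blast
  obtain M R A where P: "Aprod n p ((m,r),a) ((k,s),b) = ((M,R),A)" "ps n p m r a k s b M R A" by (rule prodE)
  show ?thesis using closure_c[OF n1 p1 x(2) y(2) P(2)] P(1) x y Acar_eq[OF p1] by simp
qed

lemma assoc: assumes "x \<in> Acar n p" "y \<in> Acar n p" "z \<in> Acar n p"
  shows "Aprod n p (Aprod n p x y) z = Aprod n p x (Aprod n p y z)"
proof -
  obtain m r a where x: "x = ((m,r),a)" "car n p m r a" using assms carE by blast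
  obtain k s b where y: "y = ((k,s),b)" "car n p k s b" using assms carE by blast
  obtain u v c where z: "z = ((u,v),c)" "car n p u v c" using assms carE by blast
  obtain Pm Pr q where P: "Aprod n p ((m,r),a) ((k,s),b) = ((Pm,Pr),q)" "ps n p m r a k s b Pm Pr q" by (rule prodE)
  obtain Qm Qr t where Q: "Aprod n p ((k,s),b) ((u,v),c) = ((Qm,Qr),t)" "ps n p k s b u v c Qm Qr t" by (rule prodE)
  obtain Lm Lr l where L: "Aprod n p ((Pm,Pr),q) ((u,v),c) = ((Lm,Lr),l)" "ps n p Pm Pr q u v c Lm Lr l" by (rule prodE)
  obtain Rm Rr l' where R: "Aprod n p ((m,r),a) ((Qm,Qr),t) = ((Rm,Rr),l')" "ps n p m r a Qm Qr t Rm Rr l'" by (rule prodE)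
  have "Lm=Rm \<and> Lr=Rr \<and> l=l'" using assoc_c[OF n1 p1 x(2) y(2) z(2) P(2) Q(2) L(2) R(2)] .
  then show ?thesis using x y z P Q L R by simp
qed

lemma comm: assumes "x \<in> Acar n p" "y \<in> Acar n p" shows "Aprod n p x y = Aprod n p y x"
proof -
  obtain m r a where x: "x = ((m,r),a)" "car n p m r a" using assms carE by blast
  obtain k s b where y: "y = ((k,s),b)" "car n p k s b" using assms carE by blast
  obtain M R A where P: "Aprod n p ((m,r),a) ((k,s),b) = ((M,R),A)" "ps n p m r a k s b M R A" by (rule prodE)
  obtain M' R' A' where P': "Aprod n p ((k,s),b) ((m,r),a) = ((M',R'),A')" "ps n p k s b m r a M' R' A'" by (rule prodE)
  show ?thesis using comm_c[OF x(2) y(2) P(2) P'(2)] P P' x y by simp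
qed

lemma top_car: "Atop n p \<in> Acar n p"
  unfolding Atop_def using Acar_eq[OF p1] car_def lx_def n1 p1 by simp

lemma bot_car: "Abot n \<in> Acar n p"
  unfolding Abot_def using Acar_eq[OF p1] car_def lx_def n1 p1 by simp

lemma unit: assumes "x \<in> Acar n p" shows "Aprod n p x (Atop n p) = x"
proof -
  obtain m r a where x: "x = ((m,r),a)" "car n p m r a" using assms carE by blast
  obtain M R A where P: "Aprod n p ((m,r),a) ((n,0),p) = ((M,R),A)" "ps n p m r a n 0 p M R A" by (rule prodE)
  show ?thesis using unit_c[OF n1 p1 x(2) P(2)] P x by (simp add: Atop_def)
qed

lemma refl: assumes "x \<in> Acar n p" shows "Ale n x x"
  using assms carE refl_c Ale_eq by metis

lemma anti: assumes "x \<in> Acar n p" "y \<in> Acar n p" "Ale n x y" "Ale n y x" shows "x = y"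
proof -
  obtain m r a where x: "x = ((m,r),a)" "car n p m r a" using assms carE by blast
  obtain k s b where y: "y = ((k,s),b)" "car n p k s b" using assms carE by blast
  show ?thesis using antisym_c[OF n1 x(2) y(2)] assms(3,4) x y Ale_eq by simp
qed

lemma trans: assumes "x \<in> Acar n p" "y \<in> Acar n p" "z \<in> Acar n p" "Ale n x y" "Ale n y z" shows "Ale n x z"
proof -
  obtain m r a where x: "x = ((m,r),a)" "car n p m r a" using assms carE by blast
  obtain k s b where y: "y = ((k,s),b)" "car n p k s b" using assms carE by blast
  obtain u v c where z: "z = ((u,v),c)" "car n p u v c" using assms carE by blast
  show ?thesis using trans_c[OF n1 x(2) y(2) z(2)] assms(4,5) x y z Ale_eq by simp
qed

lemma bounds: assumes "x \<in> Acar n p" shows "Ale n (Abot n) x \<and> Ale n x (Atop n p)"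
proof -
  obtain m r a where x: "x = ((m,r),a)" "car n p m r a" using assms carE by blast
  show ?thesis using bounds_c[OF n1 p1 x(2)] x Ale_eq by (simp add: Abot_def Atop_def)
qed

lemma Mt_glb: assumes "x \<in> Acar n p" "y \<in> Acar n p" shows "is_glb (Acar n p) (Ale n) x y (Mt n x y)"
proof -
  obtain m r a where x: "x = ((m,r),a)" "car n p m r a" using assms carE by blast
  obtain k s b where y: "y = ((k,s),b)" "car n p k s b" using assms carE by blast
  obtain M R A where P: "Mt n ((m,r),a) ((k,s),b) = ((M,R),A)" "mt n m r a k s b M R A" by (rule mtE)
  have 1: "car n p M R A \<and> le3 n M R A m r a \<and> le3 n M R A k s b" using mt_car[OF n1 p1 x(2) y(2) P(2)] .
  have 2: "\<forall>w\<in>Acar n p. Ale n w x \<and> Ale n w y \<longrightarrow> Ale n w ((M,R),A)"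
  proof (intro ballI impI)
    fix w assume w: "w \<in> Acar n p" and "Ale n w x \<and> Ale n w y"
    obtain e f g where "w = ((e,f),g)" "car n p e f g" using w carE by blast
    then show "Ale n w ((M,R),A)" using mt_glb[OF n1 p1 x(2) y(2) P(2)] \<open>Ale n w x \<and> Ale n w y\<close> x y Ale_eq by simp
  qed
  show ?thesis unfolding is_glb_def using 1 2 P x y Ale_eq Acar_eq[OF p1] by simp
qed

lemma Jn_lub: assumes "x \<in> Acar n p" "y \<in> Acar n p" shows "is_lub (Acar n p) (Ale n) x y (Jn n x y)"
proof -
  obtain m r a where x: "x = ((m,r),a)" "car n p m r a" using assms carE by blast
  obtain k s b where y: "y = ((k,s),b)" "car n p k s b" using assms carE by blast
  obtain M R A where P: "Jn n ((m,r),a) ((k,s),b) = ((M,R),A)" "jn n m r a k s b M R A" by (rule jnE)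
  have 1: "car n p M R A \<and> le3 n m r a M R A \<and> le3 n k s b M R A" using jn_car[OF n1 p1 x(2) y(2) P(2)] .
  have 2: "\<forall>w\<in>Acar n p. Ale n x w \<and> Ale n y w \<longrightarrow> Ale n ((M,R),A) w"
  proof (intro ballI impI)
    fix w assume w: "w \<in> Acar n p" and "Ale n x w \<and> Ale n y w"
    obtain e f g where "w = ((e,f),g)" "car n p e f g" using w carE by blast
    then show "Ale n ((M,R),A) w" using jn_lub[OF n1 p1 x(2) y(2) P(2)] \<open>Ale n x w \<and> Ale n y w\<close> x y Ale_eq by simp
  qed
  show ?thesis unfolding is_lub_def using 1 2 P x y Ale_eq Acar_eq[OF p1] by simp
qed

lemma Ameet_eq: assumes "x \<in> Acar n p" "y \<in> Acar n p" shows "Ameet n p x y = Mt n x y" "Mt n x y \<in> Acar n p"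
proof -
  have g: "is_glb (Acar n p) (Ale n) x y (Mt n x y)" by (rule Mt_glb[OF assms])
  then show "Mt n x y \<in> Acar n p" by (simp add: is_glb_def)
  show "Ameet n p x y = Mt n x y" unfolding Ameet_def
  proof (rule the_equality)
    show "is_glb (Acar n p) (Ale n) x y (Mt n x y)" by (rule g)
    fix z assume z: "is_glb (Acar n p) (Ale n) x y z"
    show "z = Mt n x y" using z g anti unfolding is_glb_def by metis
  qed
qed

lemma Ajoin_eq: assumes "x \<in> Acar n p" "y \<in> Acar n p" shows "Ajoin n p x y = Jn n x y" "Jn n x y \<in> Acar n p"
proof -
  have g: "is_lub (Acar n p) (Ale n) x y (Jn n x y)" by (rule Jn_lub[OF assms])
  then show "Jn n x y \<in> Acar n p" by (simp add: is_lub_def)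
  show "Ajoin n p x y = Jn n x y" unfolding Ajoin_def
  proof (rule the_equality)
    show "is_lub (Acar n p) (Ale n) x y (Jn n x y)" by (rule g)
    fix z assume z: "is_lub (Acar n p) (Ale n) x y z"
    show "z = Jn n x y" using z g anti unfolding is_lub_def by metis
  qed
qed

lemma dist: assumes "x \<in> Acar n p" "y \<in> Acar n p" "z \<in> Acar n p"
  shows "Ameet n p x (Ajoin n p y z) = Ajoin n p (Ameet n p x y) (Ameet n p x z)"
proof -
  obtain m r a where x: "x = ((m,r),a)" "car n p m r a" using assms carE by blast
  obtain k s b where y: "y = ((k,s),b)" "car n p k s b" using assms carE by blast
  obtain u v c where z: "z = ((u,v),c)" "car n p u v c" using assms carE by blast
  have e1: "Ameet n p x (Ajoin n p y z) = Mt n x (Jn n y z)"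
    using Ajoin_eq[OF assms(2,3)] Ameet_eq assms(1) by simp
  have e2: "Ajoin n p (Ameet n p x y) (Ameet n p x z) = Jn n (Mt n x y) (Mt n x z)"
    using Ameet_eq assms Ajoin_eq by simp
  obtain J1 J2 J3 where J: "Jn n ((k,s),b) ((u,v),c) = ((J1,J2),J3)" "jn n k s b u v c J1 J2 J3" by (rule jnE)
  obtain L1 L2 L3 where L: "Mt n ((m,r),a) ((J1,J2),J3) = ((L1,L2),L3)" "mt n m r a J1 J2 J3 L1 L2 L3" by (rule mtE)
  obtain P1 P2 P3 where P: "Mt n ((m,r),a) ((k,s),b) = ((P1,P2),P3)" "mt n m r a k s b P1 P2 P3" by (rule mtE)
  obtain Q1 Q2 Q3 where Q: "Mt n ((m,r),a) ((u,v),c) = ((Q1,Q2),Q3)" "mt n m r a u v c Q1 Q2 Q3" by (rule mtE)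
  obtain R1 R2 R3 where R: "Jn n ((P1,P2),P3) ((Q1,Q2),Q3) = ((R1,R2),R3)" "jn n P1 P2 P3 Q1 Q2 Q3 R1 R2 R3" by (rule jnE)
  have "L1=R1 \<and> L2=R2 \<and> L3=R3" using dist_c[OF n1 p1 x(2) y(2) z(2) J(2) L(2) P(2) Q(2) R(2)] .
  then show ?thesis using e1 e2 x y z J L P Q R by simp
qed

lemma resid: assumes "x \<in> Acar n p" "y \<in> Acar n p" "z \<in> Acar n p"
  shows "Ale n (Aprod n p x y) z \<longleftrightarrow> Ale n x (Aimp n p y z)"
proof -
  obtain m r a where x: "x = ((m,r),a)" "car n p m r a" using assms carE by blast
  obtain k s b where y: "y = ((k,s),b)" "car n p k s b" using assms carE by blast
  obtain u v c where z: "z = ((u,v),c)" "car n p u v c" using assms carE by blast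
  obtain P1 P2 P3 where P: "Aprod n p ((m,r),a) ((k,s),b) = ((P1,P2),P3)" "ps n p m r a k s b P1 P2 P3" by (rule prodE)
  obtain C1 C2 C3 where C: "Aneg n p ((u,v),c) = ((C1,C2),C3)" "ng n p u v c C1 C2 C3" by (rule negE)
  obtain Q1 Q2 Q3 where Q: "Aprod n p ((k,s),b) ((C1,C2),C3) = ((Q1,Q2),Q3)" "ps n p k s b C1 C2 C3 Q1 Q2 Q3" by (rule prodE)
  obtain I1 I2 I3 where I: "Aneg n p ((Q1,Q2),Q3) = ((I1,I2),I3)" "ng n p Q1 Q2 Q3 I1 I2 I3" by (rule negE)
  have "le3 n P1 P2 P3 u v c \<longleftrightarrow> le3 n m r a I1 I2 I3"
    using resid_c[OF n1 p1 x(2) y(2) z(2) P(2) C(2) Q(2) I(2)] .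
  then show ?thesis using x y z P C Q I Ale_eq by (simp add: Aimp_def)
qed

lemma invol: assumes "x \<in> Acar n p" shows "Aimp n p (Aimp n p x (Abot n)) (Abot n) = x"
proof -
  obtain m r a where x: "x = ((m,r),a)" "car n p m r a" using assms carE by blast
  obtain T1 T2 T3 where T: "Aneg n p ((n,0),0) = ((T1,T2),T3)" "ng n p n 0 0 T1 T2 T3" by (rule negE)
  obtain P1 P2 P3 where P: "Aprod n p ((m,r),a) ((T1,T2),T3) = ((P1,P2),P3)" "ps n p m r a T1 T2 T3 P1 P2 P3" by (rule prodE)
  obtain I1 I2 I3 where I: "Aneg n p ((P1,P2),P3) = ((I1,I2),I3)" "ng n p P1 P2 P3 I1 I2 I3" by (rule negE)
  obtain Q1 Q2 Q3 where Q: "Aprod n p ((I1,I2),I3) ((T1,T2),T3) = ((Q1,Q2),Q3)" "ps n p I1 I2 I3 T1 T2 T3 Q1 Q2 Q3" by (rule prodE)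
  obtain F1 F2 F3 where F: "Aneg n p ((Q1,Q2),Q3) = ((F1,F2),F3)" "ng n p Q1 Q2 Q3 F1 F2 F3" by (rule negE)
  have "F1=m \<and> F2=r \<and> F3=a" using invol_c[OF n1 p1 x(2) T(2) P(2) I(2) Q(2) F(2)] .
  then show ?thesis using x T P I Q F by (simp add: Aimp_def Abot_def)
qed

end

theorem theorem3p1:
  fixes n p :: int
  assumes "n \<ge> 1" and "p \<ge> 1"
  shows
    "(\<forall>a\<in>Acar n p. \<forall>b\<in>Acar n p. Aprod n p a b \<in> Acar n p)
   \<and> (\<forall>a\<in>Acar n p. \<forall>b\<in>Acar n p. \<forall>c\<in>Acar n p.
        Aprod n p (Aprod n p a b) c = Aprod n p a (Aprod n p b c))
   \<and> (\<forall>a\<in>Acar n p. \<forall>b\<in>Acar n p. Aprod n p a b = Aprod n p b a)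
   \<and> Atop n p \<in> Acar n p
   \<and> (\<forall>a\<in>Acar n p. Aprod n p a (Atop n p) = a)
   \<and> (\<forall>a\<in>Acar n p. Ale n a a)
   \<and> (\<forall>a\<in>Acar n p. \<forall>b\<in>Acar n p. Ale n a b \<and> Ale n b a \<longrightarrow> a = b)
   \<and> (\<forall>a\<in>Acar n p. \<forall>b\<in>Acar n p. \<forall>c\<in>Acar n p. Ale n a b \<and> Ale n b c \<longrightarrow> Ale n a c)
   \<and> (\<forall>a\<in>Acar n p. \<forall>b\<in>Acar n p. \<exists>z. is_glb (Acar n p) (Ale n) a b z)
   \<and> (\<forall>a\<in>Acar n p. \<forall>b\<in>Acar n p. \<exists>z. is_lub (Acar n p) (Ale n) a b z)
   \<and> (\<forall>a\<in>Acar n p. \<forall>b\<in>Acar n p. \<forall>c\<in>Acar n p.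
        Ameet n p a (Ajoin n p b c) = Ajoin n p (Ameet n p a b) (Ameet n p a c))
   \<and> Abot n \<in> Acar n p
   \<and> (\<forall>a\<in>Acar n p. Ale n (Abot n) a \<and> Ale n a (Atop n p))
   \<and> (\<forall>a\<in>Acar n p. \<forall>b\<in>Acar n p. \<forall>c\<in>Acar n p.
        Ale n (Aprod n p a b) c \<longleftrightarrow> Ale n a (Aimp n p b c))
   \<and> (\<forall>a\<in>Acar n p. Aimp n p (Aimp n p a (Abot n)) (Abot n) = a)"
proof (intro conjI)
  show "\<forall>a\<in>Acar n p. \<forall>b\<in>Acar n p. Aprod n p a b \<in> Acar n p" using clo[OF assms] by blast
  show "\<forall>a\<in>Acar n p. \<forall>b\<in>Acar n p. \<forall>c\<in>Acar n p. Aprod n p (Aprod n p a b) c = Aprod n p a (Aprod n p b c)" using assoc[OF assms] by blast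
  show "\<forall>a\<in>Acar n p. \<forall>b\<in>Acar n p. Aprod n p a b = Aprod n p b a" using comm[OF assms] by blast
  show "Atop n p \<in> Acar n p" using top_car[OF assms] .
  show "\<forall>a\<in>Acar n p. Aprod n p a (Atop n p) = a" using unit[OF assms] by blast
  show "\<forall>a\<in>Acar n p. Ale n a a" using refl[OF assms] by blast
  show "\<forall>a\<in>Acar n p. \<forall>b\<in>Acar n p. Ale n a b \<and> Ale n b a \<longrightarrow> a = b" using anti[OF assms] by blast
  show "\<forall>a\<in>Acar n p. \<forall>b\<in>Acar n p. \<forall>c\<in>Acar n p. Ale n a b \<and> Ale n b c \<longrightarrow> Ale n a c" using trans[OF assms] by blast
  show "\<forall>a\<in>Acar n p. \<forall>b\<in>Acar n p. \<exists>z. is_glb (Acar n p) (Ale n) a b z" using Mt_glb[OF assms] by blast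
  show "\<forall>a\<in>Acar n p. \<forall>b\<in>Acar n p. \<exists>z. is_lub (Acar n p) (Ale n) a b z" using Jn_lub[OF assms] by blast
  show "\<forall>a\<in>Acar n p. \<forall>b\<in>Acar n p. \<forall>c\<in>Acar n p. Ameet n p a (Ajoin n p b c) = Ajoin n p (Ameet n p a b) (Ameet n p a c)" using dist[OF assms] by blast
  show "Abot n \<in> Acar n p" using bot_car[OF assms] .
  show "\<forall>a\<in>Acar n p. Ale n (Abot n) a \<and> Ale n a (Atop n p)" using bounds[OF assms] by blast
  show "\<forall>a\<in>Acar n p. \<forall>b\<in>Acar n p. \<forall>c\<in>Acar n p. Ale n (Aprod n p a b) c \<longleftrightarrow> Ale n a (Aimp n p b c)" using resid[OF assms] by blast
  show "\<forall>a\<in>Acar n p. Aimp n p (Aimp n p a (Abot n)) (Abot n) = a" using invol[OF assms] by blast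
qed


end
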